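(* Let $q$ be a prime power and $r$ odd. In any hyperbolic avsp $\{S_1,\dots,S_{q^{\frac{r+1}{2}}}\}$ of ${\rm PG}(r+1,q)$ with respect to a hyperplane $H$, any two distinct members $S_i,S_j$ meet in exactly one point, and $\Pi_i=S_i\cap H$, $\Pi_j=S_j\cap H$ meet in exactly one point. Consequently, if $r\equiv -1\pmod 4$, no hyperbolic avsp of ${\rm PG}(r+1,q)$ exists.
   Context: Affine vector space partition (avsp): given a hyperplane $H$ of ${\rm PG}(r+1,q)$, an avsp (with respect to $H$) is a set $\mathcal P$ of subspaces, none contained in $H$, such that every point of ${\rm PG}(r+1,q)\setminus H$ lies in exactly one member of $\mathcal P$. Hyperbolic avsp ($r$ odd): an avsp $\mathcal P=\{S_1,\dots,S_N\}$ of ${\rm PG}(r+1,q)$ with respect to $H$, where $N=q^{\frac{r+1}{2}}$ and every $S_i$ is a $\frac{r+1}{2}$-dimensional projective subspace, such that the sets $\Pi_i=S_i\cap H$ are $N$ generators (i.e. $\frac{r-1}{2}$-dimensional subspaces contained in the quadric) of a non-degenerate hyperbolic quadric $\mathcal Q^+(r,q)\subset H$ with: (1) each $\Pi_i$ disjoint from a fixed generator $\Pi$ of $\mathcal Q^+(r,q)$; (2) distinct $S_i,S_j$ meet in at most one point, and distinct $\Pi_i,\Pi_j$ meet in at most one point; (3) if $|\Pi_i\cap\Pi_j|=1$, then $\langle S_i,S_j\rangle\cap\mathcal Q^+(r,q)=\mathcal Q^+(r,q)$. *)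

theory Defs
  imports Complex_Main "HOL-Library.Function_Algebras"
begin

text \<open>Vectors of F_q^n are modelled as functions nat => 'a vanishing from index n on.
  PG(n-1,q) is the projective geometry of the vector space ambient n; a projective subspace
  of projective dimension k is a linear subspace of vector dimension k+1; points are
  one-dimensional linear subspaces.\<close>

definition fscale :: "'a::field \<Rightarrow> (nat \<Rightarrow> 'a) \<Rightarrow> (nat \<Rightarrow> 'a)" where
  "fscale c v = (\<lambda>i. c * v i)"

lemma vector_space_fscale: "vector_space (fscale :: 'a::field \<Rightarrow> _)"
  by unfold_locales (auto simp: fscale_def algebra_simps fun_eq_iff)

definition ambient :: "nat \<Rightarrow> (nat \<Rightarrow> 'a::field) set" where
  "ambient n = {v. \<forall>i\<ge>n. v i = 0}"

definition lsubspace :: "nat \<Rightarrow> (nat \<Rightarrow> 'a::field) set \<Rightarrow> bool" where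
  "lsubspace n U \<longleftrightarrow> U \<subseteq> ambient n \<and> module.subspace fscale U"

definition vdim :: "(nat \<Rightarrow> 'a::field) set \<Rightarrow> nat" where
  "vdim U = vector_space.dim fscale U"

definition ssum :: "(nat \<Rightarrow> 'a::field) set \<Rightarrow> (nat \<Rightarrow> 'a) set \<Rightarrow> (nat \<Rightarrow> 'a) set" where
  "ssum U W = {u + w | u w. u \<in> U \<and> w \<in> W}"

definition polar :: "((nat \<Rightarrow> 'a::field) \<Rightarrow> 'a) \<Rightarrow> (nat \<Rightarrow> 'a) \<Rightarrow> (nat \<Rightarrow> 'a) \<Rightarrow> 'a" where
  "polar Q u v = Q (u + v) - Q u - Q v"

definition quadratic_form_on :: "(nat \<Rightarrow> 'a::field) set \<Rightarrow> ((nat \<Rightarrow> 'a) \<Rightarrow> 'a) \<Rightarrow> bool" where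
  "quadratic_form_on H Q \<longleftrightarrow>
     (\<forall>c. \<forall>v\<in>H. Q (fscale c v) = c ^ 2 * Q v) \<and>
     (\<forall>u\<in>H. \<forall>w\<in>H. \<forall>v\<in>H. polar Q (u + w) v = polar Q u v + polar Q w v) \<and>
     (\<forall>c. \<forall>u\<in>H. \<forall>v\<in>H. polar Q (fscale c u) v = c * polar Q u v)"

definition nondegenerate_on :: "(nat \<Rightarrow> 'a::field) set \<Rightarrow> ((nat \<Rightarrow> 'a) \<Rightarrow> 'a) \<Rightarrow> bool" where
  "nondegenerate_on H Q \<longleftrightarrow>
     (\<forall>v\<in>H. Q v = 0 \<and> (\<forall>u\<in>H. polar Q v u = 0) \<longrightarrow> v = 0)"

definition generator :: "nat \<Rightarrow> (nat \<Rightarrow> 'a::field) set \<Rightarrow> ((nat \<Rightarrow> 'a) \<Rightarrow> 'a) \<Rightarrow> (nat \<Rightarrow> 'a) set \<Rightarrow> bool" where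
  "generator n H Q P \<longleftrightarrow> lsubspace n P \<and> P \<subseteq> H \<and> vdim P = vdim H div 2 \<and> (\<forall>v\<in>P. Q v = 0)"

text \<open>Non-degenerate hyperbolic quadric in H (H of even vector dimension): non-degenerate
  of Witt index vdim H / 2, i.e. it contains subspaces of vector dimension vdim H / 2.\<close>
definition hyperbolic_quadric :: "nat \<Rightarrow> (nat \<Rightarrow> 'a::field) set \<Rightarrow> ((nat \<Rightarrow> 'a) \<Rightarrow> 'a) \<Rightarrow> bool" where
  "hyperbolic_quadric n H Q \<longleftrightarrow> lsubspace n H \<and> even (vdim H) \<and>
     quadratic_form_on H Q \<and> nondegenerate_on H Q \<and> (\<exists>P. generator n H Q P)"

definition avsp :: "nat \<Rightarrow> (nat \<Rightarrow> 'a::field) set \<Rightarrow> nat \<Rightarrow> (nat \<Rightarrow> (nat \<Rightarrow> 'a) set) \<Rightarrow> bool" where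
  "avsp n H N S \<longleftrightarrow> lsubspace n H \<and> vdim H + 1 = n \<and> inj_on S {..<N} \<and>
     (\<forall>i<N. lsubspace n (S i) \<and> \<not> S i \<subseteq> H) \<and>
     (\<forall>p. lsubspace n p \<and> vdim p = 1 \<and> \<not> p \<subseteq> H \<longrightarrow> (\<exists>!i. i < N \<and> p \<subseteq> S i))"

definition hyperbolic_avsp :: "nat \<Rightarrow> (nat \<Rightarrow> 'a::{field,finite}) set \<Rightarrow> ((nat \<Rightarrow> 'a) \<Rightarrow> 'a)
    \<Rightarrow> (nat \<Rightarrow> 'a) set \<Rightarrow> (nat \<Rightarrow> (nat \<Rightarrow> 'a) set) \<Rightarrow> bool" where
  "hyperbolic_avsp r H Q P0 S \<longleftrightarrow>
     (let N = card (UNIV :: 'a set) ^ ((r + 1) div 2) in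
       odd r \<and> avsp (r + 2) H N S \<and>
       (\<forall>i<N. vdim (S i) = (r + 1) div 2 + 1) \<and>
       hyperbolic_quadric (r + 2) H Q \<and>
       generator (r + 2) H Q P0 \<and>
       inj_on (\<lambda>i. S i \<inter> H) {..<N} \<and>
       (\<forall>i<N. generator (r + 2) H Q (S i \<inter> H) \<and> S i \<inter> H \<inter> P0 = {0}) \<and>
       (\<forall>i<N. \<forall>j<N. i \<noteq> j \<longrightarrow> vdim (S i \<inter> S j) \<le> 1 \<and> vdim (S i \<inter> S j \<inter> H) \<le> 1) \<and>
       (\<forall>i<N. \<forall>j<N. i \<noteq> j \<and> vdim (S i \<inter> S j \<inter> H) = 1 \<longrightarrow>
           {v \<in> H. Q v = 0} \<subseteq> ssum (S i) (S j)))"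

end

theory Submission imports Defs "HOL-Library.FuncSet" begin

interpretation fs: vector_space "fscale :: 'a::field \<Rightarrow> (nat \<Rightarrow> 'a) \<Rightarrow> _"
  by (rule vector_space_fscale)

lemma card_span_indep:
  fixes B :: "(nat \<Rightarrow> 'a::{field,finite}) set"
  assumes "finite B" "fs.independent B"
  shows "card (fs.span B) = card (UNIV :: 'a set) ^ card B"
  using assms
proof (induction B rule: finite_induct)
  case empty
  then show ?case by simp
next
  case (insert a B)
  have ind: "fs.independent B" and na: "a \<notin> fs.span B"
    using insert.prems insert.hyps fs.independent_insert[of a B] by (auto split: if_splits)
  have "bij_betw (\<lambda>(k, x). fscale k a + x) ((UNIV::'a set) \<times> fs.span B) (fs.span (insert a B))"
  proof (rule bij_betwI')
    fix p p' assume p: "p \<in> (UNIV::'a set) \<times> fs.span B" and p': "p' \<in> (UNIV::'a set) \<times> fs.span B"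
    obtain k x where [simp]: "p = (k, x)" by (cases p)
    obtain k' x' where [simp]: "p' = (k', x')" by (cases p')
    show "((\<lambda>(k, x). fscale k a + x) p = (\<lambda>(k, x). fscale k a + x) p') = (p = p')"
    proof
      assume eq: "(\<lambda>(k, x). fscale k a + x) p = (\<lambda>(k, x). fscale k a + x) p'"
      have "fscale (k - k') a = x' - x"
        using eq by (auto simp: fscale_def fun_eq_iff algebra_simps)
      also have "\<dots> \<in> fs.span B" using p p' by (auto intro: fs.span_diff)
      finally have sp: "fscale (k - k') a \<in> fs.span B" .
      have k: "k = k'"
      proof (rule ccontr)
        assume "k \<noteq> k'"
        then have "fscale (inverse (k - k')) (fscale (k - k') a) = a"
          by (simp add: fscale_def fun_eq_iff)
        then show False using na fs.span_scale[OF sp, of "inverse (k - k')"] by simp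
      qed
      then show "p = p'" using eq by (auto simp: fscale_def)
    qed simp
  next
    fix p assume "p \<in> (UNIV::'a set) \<times> fs.span B"
    then show "(\<lambda>(k, x). fscale k a + x) p \<in> fs.span (insert a B)"
    proof (cases p)
      case (Pair k x)
      have "x \<in> fs.span (insert a B)" using \<open>p \<in> _\<close> Pair fs.span_mono[of B "insert a B"] by auto
      moreover have "fscale k a \<in> fs.span (insert a B)" by (intro fs.span_scale fs.span_base) simp
      ultimately show ?thesis using Pair by (simp add: fs.span_add)
    qed
  next
    fix y assume "y \<in> fs.span (insert a B)"
    then obtain k where "y - fscale k a \<in> fs.span B" by (auto simp: fs.span_insert)
    then show "\<exists>p\<in>UNIV \<times> fs.span B. y = (\<lambda>(k, x). fscale k a + x) p"
      by (intro bexI[of _ "(k, y - fscale k a)"]) auto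
  qed
  then have "card (fs.span (insert a B)) = card (UNIV :: 'a set) * card (fs.span B)"
    by (simp add: bij_betw_same_card[symmetric] card_cartesian_product)
  then show ?case using insert ind by simp
qed

lemma card_subspace:
  fixes U :: "(nat \<Rightarrow> 'a::{field,finite}) set"
  assumes "finite U" "fs.subspace U"
  shows "card U = card (UNIV :: 'a set) ^ vdim U"
proof -
  obtain B where B: "B \<subseteq> U" "fs.independent B" "U \<subseteq> fs.span B" "card B = fs.dim U"
    by (rule fs.basis_exists)
  have "fs.span B = U" using B assms fs.span_subspace by blast
  moreover have "finite B" using B assms finite_subset by blast
  ultimately show ?thesis using card_span_indep[of B] B by (simp add: vdim_def)
qed


definition rad :: "(nat \<Rightarrow> 'a::field) set \<Rightarrow> ((nat \<Rightarrow> 'a) \<Rightarrow> (nat \<Rightarrow> 'a) \<Rightarrow> 'a) \<Rightarrow> (nat \<Rightarrow> 'a) set" where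
  "rad X b = {x\<in>X. \<forall>y\<in>X. b x y = 0}"

definition bilin :: "(nat \<Rightarrow> 'a::field) set \<Rightarrow> ((nat \<Rightarrow> 'a) \<Rightarrow> (nat \<Rightarrow> 'a) \<Rightarrow> 'a) \<Rightarrow> bool" where
  "bilin X b \<longleftrightarrow> (\<forall>x\<in>X. \<forall>y\<in>X. \<forall>z\<in>X. b (x + y) z = b x z + b y z \<and> b z (x + y) = b z x + b z y)
     \<and> (\<forall>c. \<forall>x\<in>X. \<forall>z\<in>X. b (fscale c x) z = c * b x z \<and> b z (fscale c x) = c * b z x)
     \<and> (\<forall>x\<in>X. b x x = 0)"

lemma bilin_addL: "bilin X b \<Longrightarrow> x \<in> X \<Longrightarrow> y \<in> X \<Longrightarrow> z \<in> X \<Longrightarrow> b (x + y) z = b x z + b y z"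
  and bilin_addR: "bilin X b \<Longrightarrow> x \<in> X \<Longrightarrow> y \<in> X \<Longrightarrow> z \<in> X \<Longrightarrow> b z (x + y) = b z x + b z y"
  and bilin_scL: "bilin X b \<Longrightarrow> x \<in> X \<Longrightarrow> z \<in> X \<Longrightarrow> b (fscale c x) z = c * b x z"
  and bilin_scR: "bilin X b \<Longrightarrow> x \<in> X \<Longrightarrow> z \<in> X \<Longrightarrow> b z (fscale c x) = c * b z x"
  and bilin_alt: "bilin X b \<Longrightarrow> x \<in> X \<Longrightarrow> b x x = 0"
  unfolding bilin_def by blast+

lemmas bilin_rules = bilin_addL bilin_addR bilin_scL bilin_scR bilin_alt

lemma bilin_skew:
  assumes "bilin X b" "fs.subspace X" "x \<in> X" "y \<in> X"
  shows "b x y = - b y x"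
proof -
  have xy: "x + y \<in> X" using assms by (simp add: fs.subspace_add)
  have "0 = b (x + y) (x + y)" using assms xy by (simp add: bilin_alt)
  also have "\<dots> = b x (x + y) + b y (x + y)" using assms xy by (simp add: bilin_addL)
  also have "\<dots> = b x x + b x y + (b y x + b y y)" using assms by (simp add: bilin_addR)
  finally have "b x y + b y x = 0" using assms by (simp add: bilin_alt)
  then show ?thesis by (simp add: eq_neg_iff_add_eq_0)
qed

lemma bilin_0R: "bilin X b \<Longrightarrow> z \<in> X \<Longrightarrow> b z 0 = 0"
  using bilin_scR[of X b z z 0] by simp

lemma bilin_mono: "bilin X b \<Longrightarrow> Y \<subseteq> X \<Longrightarrow> bilin Y b"
  unfolding bilin_def by blast

lemma alt_even:
  fixes X :: "(nat \<Rightarrow> 'a::{field,finite}) set"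
  assumes "finite X" "fs.subspace X" "bilin X b"
  shows "\<exists>k. card X = card (rad X b) * card (UNIV :: 'a set) ^ (2 * k)"
  using assms
proof (induction "card X" arbitrary: X rule: less_induct)
  case less
  note bl = less.prems(3) and sub = less.prems(2)
  show ?case
  proof (cases "rad X b = X")
    case True
    then show ?thesis by (intro exI[of _ 0]) simp
  next
    case False
    then obtain u v0 where u: "u \<in> X" and v0: "v0 \<in> X" and uv0: "b u v0 \<noteq> 0"
      unfolding rad_def by auto
    define v where "v = fscale (inverse (b u v0)) v0"
    have v: "v \<in> X" using v0 sub by (simp add: v_def fs.subspace_scale)
    have uv: "b u v = 1" using bl u v0 uv0 by (simp add: v_def bilin_def)
    have vu: "b v u = -1" using bilin_skew[OF bl sub v u] uv by simp
    have uu: "b u u = 0" and vv: "b v v = 0" using bl u v by (auto simp: bilin_rules)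
    define X' where "X' = {x\<in>X. b u x = 0 \<and> b v x = 0}"
    have X'X: "X' \<subseteq> X" by (auto simp: X'_def)
    have sub': "fs.subspace X'"
      unfolding fs.subspace_def X'_def
    proof (intro conjI ballI allI)
      show "0 \<in> {x \<in> X. b u x = 0 \<and> b v x = 0}"
        using bilin_0R[OF bl u] bilin_0R[OF bl v] sub by (simp add: fs.subspace_0)
    next
      fix x y assume "x \<in> {x \<in> X. b u x = 0 \<and> b v x = 0}" "y \<in> {x \<in> X. b u x = 0 \<and> b v x = 0}"
      then show "x + y \<in> {x \<in> X. b u x = 0 \<and> b v x = 0}"
        using bl u v sub by (auto simp: bilin_rules fs.subspace_add)
    next
      fix c x assume "x \<in> {x \<in> X. b u x = 0 \<and> b v x = 0}"
      then show "fscale c x \<in> {x \<in> X. b u x = 0 \<and> b v x = 0}"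
        using bl u v sub by (auto simp: bilin_rules fs.subspace_scale)
    qed
    have fin': "finite X'" using less.prems(1) X'X finite_subset by blast
    have "u \<notin> X'" using vu by (simp add: X'_def)
    then have lt: "card X' < card X" using u X'X less.prems(1) by (metis psubset_card_mono psubsetI)
    obtain k where k: "card X' = card (rad X' b) * card (UNIV :: 'a set) ^ (2 * k)"
      using less.hyps[OF lt fin' sub' bilin_mono[OF bl X'X]] by blast
    define f where "f = (\<lambda>(y, a, c). y + fscale a u + fscale c v)"
    have fX: "f p \<in> X" if "p \<in> X' \<times> (UNIV::'a set) \<times> (UNIV::'a set)" for p
      using that X'X u v sub by (auto simp: f_def fs.subspace_add fs.subspace_scale)
    have bu: "b u (f (y, a, c)) = c" and bvf: "b v (f (y, a, c)) = - a" if "y \<in> X'" for y a c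
    proof -
      have y: "y \<in> X" using that X'X by auto
      have au: "fscale a u \<in> X" and cv: "fscale c v \<in> X" using u v sub by (auto simp: fs.subspace_scale)
      have "b u (f (y, a, c)) = b u y + b u (fscale a u) + b u (fscale c v)"
        using bl y au cv u sub by (simp add: f_def bilin_def fs.subspace_add)
      then show "b u (f (y, a, c)) = c" using bl u v that uu uv by (simp add: bilin_rules X'_def)
      have "b v (f (y, a, c)) = b v y + b v (fscale a u) + b v (fscale c v)"
        using bl y au cv v sub by (simp add: f_def bilin_def fs.subspace_add)
      then show "b v (f (y, a, c)) = - a" using bl u v that vu vv by (simp add: bilin_rules X'_def)
    qed
    have bij: "bij_betw f (X' \<times> (UNIV::'a set) \<times> (UNIV::'a set)) X"
    proof (rule bij_betwI')
      fix p p' assume p: "p \<in> X' \<times> (UNIV::'a set) \<times> (UNIV::'a set)"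
        and p': "p' \<in> X' \<times> (UNIV::'a set) \<times> (UNIV::'a set)"
      obtain y a c where P: "p = (y, a, c)" by (cases p) auto
      obtain y' a' c' where P': "p' = (y', a', c')" by (cases p') auto
      show "(f p = f p') = (p = p')"
      proof
        assume eq: "f p = f p'"
        have "c = c'" using bu[of y a c] bu[of y' a' c'] eq p p' P P' by auto
        moreover have "a = a'" using bvf[of y a c] bvf[of y' a' c'] eq p p' P P' by auto
        ultimately show "p = p'" using eq P P' by (auto simp: f_def)
      qed simp
    next
      fix p assume "p \<in> X' \<times> (UNIV::'a set) \<times> (UNIV::'a set)"
      then show "f p \<in> X" by (rule fX)
    next
      fix x assume x: "x \<in> X"
      define a where "a = - b v x"
      define c where "c = b u x"
      define y where "y = x - fscale a u - fscale c v"
      have au: "fscale a u \<in> X" and cv: "fscale c v \<in> X" using u v sub by (auto simp: fs.subspace_scale)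
      have yX: "y \<in> X" using x au cv sub by (simp add: y_def fs.subspace_diff)
      have xe: "x = y + fscale a u + fscale c v" by (simp add: y_def)
      have "b u x = b u y + b u (fscale a u) + b u (fscale c v)"
        using bl yX au cv u sub by (subst xe) (simp add: bilin_rules fs.subspace_add)
      then have 1: "b u y = 0" using bl u v uu uv by (simp add: bilin_rules c_def)
      have "b v x = b v y + b v (fscale a u) + b v (fscale c v)"
        using bl yX au cv v sub by (subst xe) (simp add: bilin_rules fs.subspace_add)
      moreover have "b v (fscale a u) = a * b v u" by (rule bilin_scR[OF bl u v])
      moreover have "b v (fscale c v) = c * b v v" by (rule bilin_scR[OF bl v v])
      ultimately have 2: "b v y = 0" using vu vv by (simp add: a_def)
      show "\<exists>p\<in>X' \<times> (UNIV::'a set) \<times> (UNIV::'a set). x = f p"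
        using 1 2 yX xe by (intro bexI[of _ "(y, a, c)"]) (auto simp: X'_def f_def)
    qed
    have cX: "card X = card X' * (card (UNIV :: 'a set) * card (UNIV :: 'a set))"
      using bij_betw_same_card[OF bij] by (simp only: card_cartesian_product)
    have rr: "rad X' b = rad X b"
    proof
      show "rad X b \<subseteq> rad X' b"
      proof
        fix x assume x: "x \<in> rad X b"
        then have xX: "x \<in> X" and z: "\<forall>y\<in>X. b x y = 0" by (auto simp: rad_def)
        have "b u x = 0" using bilin_skew[OF bl sub u xX] z u by simp
        moreover have "b v x = 0" using bilin_skew[OF bl sub v xX] z v by simp
        ultimately show "x \<in> rad X' b" using xX z X'X by (auto simp: rad_def X'_def)
      qed
    next
      show "rad X' b \<subseteq> rad X b"
      proof
        fix x assume x: "x \<in> rad X' b"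
        then have xX': "x \<in> X'" and z: "\<forall>y\<in>X'. b x y = 0" by (auto simp: rad_def)
        have xX: "x \<in> X" using xX' X'X by auto
        have xu: "b x u = 0" using bilin_skew[OF bl sub xX u] xX' by (simp add: X'_def)
        have xv: "b x v = 0" using bilin_skew[OF bl sub xX v] xX' by (simp add: X'_def)
        have "b x y = 0" if y: "y \<in> X" for y
        proof -
          obtain p where p: "p \<in> X' \<times> (UNIV::'a set) \<times> (UNIV::'a set)" "y = f p"
            using bij y unfolding bij_betw_def by blast
          obtain y' a c where P: "p = (y', a, c)" by (cases p) auto
          have y': "y' \<in> X'" using p P by auto
          then have y'X: "y' \<in> X" using X'X by auto
          have au: "fscale a u \<in> X" and cv: "fscale c v \<in> X" using u v sub by (auto simp: fs.subspace_scale)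
          have "b x y = b x y' + b x (fscale a u) + b x (fscale c v)"
            using bl y'X au cv xX sub p P by (simp add: f_def bilin_def fs.subspace_add)
          also have "\<dots> = 0" using bl xX u v xu xv z y' by (simp add: bilin_rules)
          finally show ?thesis .
        qed
        then show "x \<in> rad X b" using xX by (simp add: rad_def)
      qed
    qed
    show ?thesis
    proof (intro exI[of _ "Suc k"])
      show "card X = card (rad X b) * card (UNIV :: 'a set) ^ (2 * Suc k)"
        unfolding cX k rr by (simp add: power_add mult_2 power_Suc)
    qed
  qed
qed


lemma card_ge2: "2 \<le> card (UNIV :: 'a::{field,finite} set)"
proof -
  have "{0::'a, 1} \<subseteq> UNIV" by simp
  then have "card {0::'a, 1} \<le> card (UNIV :: 'a set)" by (intro card_mono) auto
  then show ?thesis by simp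
qed

lemma ambient_bij:
  "bij_betw (\<lambda>v. restrict v {..<n}) (ambient n) (\<Pi>\<^sub>E i\<in>{..<n}. (UNIV :: 'a::field set))"
proof (rule bij_betwI')
  fix x y :: "nat \<Rightarrow> 'a" assume "x \<in> ambient n" "y \<in> ambient n"
  then show "(restrict x {..<n} = restrict y {..<n}) = (x = y)"
    by (auto simp: ambient_def fun_eq_iff restrict_def) (metis not_le)
next
  fix x :: "nat \<Rightarrow> 'a" show "restrict x {..<n} \<in> (\<Pi>\<^sub>E i\<in>{..<n}. UNIV)" by simp
next
  fix f :: "nat \<Rightarrow> 'a" assume f: "f \<in> (\<Pi>\<^sub>E i\<in>{..<n}. UNIV)"
  show "\<exists>x\<in>ambient n. f = restrict x {..<n}"
    using f by (intro bexI[of _ "\<lambda>i. if i < n then f i else 0"]) (auto simp: ambient_def fun_eq_iff PiE_def extensional_def)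
qed

lemma card_ambient: "card (ambient n :: (nat \<Rightarrow> 'a::{field,finite}) set) = card (UNIV :: 'a set) ^ n"
  using bij_betw_same_card[OF ambient_bij[where 'a='a, of n]] by (simp add: card_PiE)

lemma finite_ambient: "finite (ambient n :: (nat \<Rightarrow> 'a::{field,finite}) set)"
  using bij_betw_finite[OF ambient_bij[where 'a='a, of n]] by (simp add: finite_PiE)

lemma card_ssum:
  fixes U W :: "(nat \<Rightarrow> 'a::{field,finite}) set"
  assumes "finite U" "finite W" "fs.subspace U" "fs.subspace W"
  shows "card (ssum U W) * card (U \<inter> W) = card U * card W"
proof -
  define F where "F s = {p \<in> U \<times> W. fst p + snd p = s}" for s
  have UW: "U \<times> W = (\<Union>s\<in>ssum U W. F s)" by (auto simp: F_def ssum_def) blast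
  have finS: "finite (ssum U W)"
  proof -
    have "ssum U W = (\<lambda>(u, w). u + w) ` (U \<times> W)" by (auto simp: ssum_def image_iff)
    then show ?thesis using assms by simp
  qed
  have cF: "card (F s) = card (U \<inter> W)" if s: "s \<in> ssum U W" for s
  proof -
    obtain u0 w0 where u0: "u0 \<in> U" and w0: "w0 \<in> W" and s0: "s = u0 + w0"
      using s by (auto simp: ssum_def)
    have "bij_betw (\<lambda>t. (u0 + t, w0 - t)) (U \<inter> W) (F s)"
    proof (rule bij_betwI')
      fix t assume "t \<in> U \<inter> W"
      then show "(u0 + t, w0 - t) \<in> F s"
        using u0 w0 s0 assms by (auto simp: F_def fs.subspace_add fs.subspace_diff)
    next
      fix p assume p: "p \<in> F s"
      then obtain u w where P: "p = (u, w)" "u \<in> U" "w \<in> W" "u + w = s" by (auto simp: F_def)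
      have "u - u0 \<in> U" using P u0 assms by (simp add: fs.subspace_diff)
      moreover have "u - u0 = w0 - w" using P s0 by (simp add: algebra_simps)
      moreover have "w0 - w \<in> W" using P w0 assms by (simp add: fs.subspace_diff)
      ultimately have t: "u - u0 \<in> U \<inter> W" by simp
      have "p = (u0 + (u - u0), w0 - (u - u0))" using P \<open>u - u0 = w0 - w\<close> by (simp add: algebra_simps)
      then show "\<exists>t\<in>U \<inter> W. p = (u0 + t, w0 - t)" using t by blast
    qed auto
    then show ?thesis by (simp add: bij_betw_same_card)
  qed
  have "card U * card W = card (U \<times> W)" by (simp add: card_cartesian_product)
  also have "\<dots> = (\<Sum>s\<in>ssum U W. card (F s))"
    unfolding UW using finS assms
    by (intro card_UN_disjoint) (auto simp: F_def)
  also have "\<dots> = card (ssum U W) * card (U \<inter> W)" using cF by simp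
  finally show ?thesis by simp
qed

lemma power_eq_q:
  fixes q :: nat assumes "2 \<le> q" shows "q ^ k = q \<longleftrightarrow> k = 1"
  using assms power_inject_exp[of q k 1] by simp


lemma parity:
  fixes H U V W :: "(nat \<Rightarrow> 'a::{field,finite}) set" and Q :: "(nat \<Rightarrow> 'a) \<Rightarrow> 'a"
  defines "q \<equiv> card (UNIV :: 'a set)"
  assumes fH: "finite H" and sH: "fs.subspace H" and cH: "card H = q ^ (2 * m)"
    and qf: "quadratic_form_on H Q" and nd: "nondegenerate_on H Q"
    and fU: "finite U" and sU: "fs.subspace U" and UH: "U \<subseteq> H" and cU: "card U = q ^ m" and QU: "\<forall>x\<in>U. Q x = 0"
    and fV: "finite V" and sV: "fs.subspace V" and VH: "V \<subseteq> H" and cV: "card V = q ^ m" and QV: "\<forall>x\<in>V. Q x = 0"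
    and fW: "finite W" and sW: "fs.subspace W" and WH: "W \<subseteq> H" and cW: "card W = q ^ m" and QW: "\<forall>x\<in>W. Q x = 0"
    and UV: "U \<inter> V = {0}" and WV: "W \<inter> V = {0}" and cUW: "card (U \<inter> W) = q"
  shows "odd m"
proof -
  define B where "B = polar Q"
  have q2: "2 \<le> q" unfolding q_def by (rule card_ge2)
  have BaddL: "B (x + y) z = B x z + B y z" if "x \<in> H" "y \<in> H" "z \<in> H" for x y z
    using qf that by (simp add: quadratic_form_on_def B_def)
  have BscL: "B (fscale c x) z = c * B x z" if "x \<in> H" "z \<in> H" for c x z
    using qf that by (simp add: quadratic_form_on_def B_def)
  have Bsym: "B x y = B y x" for x y by (simp add: B_def polar_def add.commute algebra_simps)
  have fs00: "fscale (0::'a) (0::nat \<Rightarrow> 'a) = 0" by (simp add: fscale_def zero_fun_def)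
  have Q0: "Q 0 = 0"
    using qf fs.subspace_0[OF sH] unfolding quadratic_form_on_def by (metis fs00 mult_zero_left zero_power2)
  have B0: "B x 0 = 0" for x by (simp add: B_def polar_def Q0)
  have Bts: "B x y = 0" if "fs.subspace T" "\<forall>t\<in>T. Q t = 0" "x \<in> T" "y \<in> T" for T x y
    using that by (simp add: B_def polar_def fs.subspace_add)
  have ssumH: "ssum X V = H" if sX: "fs.subspace X" and fX: "finite X" and XH: "X \<subseteq> H"
      and cX: "card X = q ^ m" and XV: "X \<inter> V = {0}" for X
  proof -
    have sub: "ssum X V \<subseteq> H" using XH VH sH by (auto simp: ssum_def intro!: fs.subspace_add)
    have "card (ssum X V) * card (X \<inter> V) = card X * card V" by (rule card_ssum[OF fX fV sX sV])
    then have "card (ssum X V) = card H" using cX cV cH XV by (simp add: power_add mult_2 power_mult_distrib)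
    then show ?thesis using sub fH by (simp add: card_subset_eq)
  qed
  have HUV: "ssum U V = H" by (rule ssumH[OF sU fU UH cU UV])
  have HWV: "ssum W V = H" by (rule ssumH[OF sW fW WH cW WV])
  define g where "g x = (THE v. v \<in> V \<and> x + v \<in> W)" for x
  have g_uniq: "v1 = v2" if "v1 \<in> V" "x + v1 \<in> W" "v2 \<in> V" "x + v2 \<in> W" for x v1 v2
  proof -
    have "v1 - v2 = (x + v1) - (x + v2)" by simp
    then have "v1 - v2 \<in> W \<inter> V" using that sW sV by (metis IntI fs.subspace_diff)
    then show ?thesis using WV by simp
  qed
  have g_ex: "\<exists>v. v \<in> V \<and> x + v \<in> W" if "x \<in> H" for x
  proof -
    have "x \<in> ssum W V" using that HWV by simp
    then obtain w v where "x = w + v" "w \<in> W" "v \<in> V" by (auto simp: ssum_def)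
    then show ?thesis using sV by (intro exI[of _ "- v"]) (auto simp: fs.subspace_neg)
  qed
  have g_prop: "g x \<in> V \<and> x + g x \<in> W" if "x \<in> H" for x
  proof -
    have "\<exists>!v. v \<in> V \<and> x + v \<in> W" using g_ex[OF that] g_uniq by blast
    then show ?thesis unfolding g_def by (rule theI')
  qed
  have g_eq: "g x = v" if "x \<in> H" "v \<in> V" "x + v \<in> W" for x v
    using g_prop[OF that(1)] g_uniq that by blast
  have gH: "g x \<in> H" if "x \<in> H" for x using g_prop[OF that] VH by auto
  have g_add: "g (x + y) = g x + g y" if "x \<in> H" "y \<in> H" for x y
  proof (rule g_eq)
    show "x + y \<in> H" using that sH by (simp add: fs.subspace_add)
    show "g x + g y \<in> V" using g_prop that sV by (simp add: fs.subspace_add)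
    have "x + y + (g x + g y) = (x + g x) + (y + g y)" by (simp add: algebra_simps)
    moreover have "(x + g x) + (y + g y) \<in> W" using g_prop that sW by (simp add: fs.subspace_add)
    ultimately show "x + y + (g x + g y) \<in> W" by metis
  qed
  have g_sc: "g (fscale c x) = fscale c (g x)" if "x \<in> H" for c x
  proof (rule g_eq)
    show "fscale c x \<in> H" using that sH by (simp add: fs.subspace_scale)
    show "fscale c (g x) \<in> V" using g_prop that sV by (simp add: fs.subspace_scale)
    have "fscale c x + fscale c (g x) = fscale c (x + g x)" by (simp add: fscale_def fun_eq_iff algebra_simps)
    moreover have "fscale c (x + g x) \<in> W" using g_prop that sW by (simp add: fs.subspace_scale)
    ultimately show "fscale c x + fscale c (g x) \<in> W" by metis
  qed
  define \<beta> where "\<beta> x y = B (g x) y" for x y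
  have bl: "bilin U \<beta>"
    unfolding bilin_def
  proof (intro conjI ballI allI)
    fix x y z assume xyz: "x \<in> U" "y \<in> U" "z \<in> U"
    then have h: "x \<in> H" "y \<in> H" "z \<in> H" using UH by auto
    show "\<beta> (x + y) z = \<beta> x z + \<beta> y z"
      using h by (simp add: \<beta>_def g_add BaddL gH)
    have "\<beta> z (x + y) = B (x + y) (g z)" by (simp add: \<beta>_def Bsym)
    also have "\<dots> = B x (g z) + B y (g z)" using h by (simp add: BaddL gH)
    finally show "\<beta> z (x + y) = \<beta> z x + \<beta> z y" by (simp add: \<beta>_def Bsym)
  next
    fix c x z assume xz: "x \<in> U" "z \<in> U"
    then have h: "x \<in> H" "z \<in> H" using UH by auto
    show "\<beta> (fscale c x) z = c * \<beta> x z" using h by (simp add: \<beta>_def g_sc BscL gH)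
    have "\<beta> z (fscale c x) = B (fscale c x) (g z)" by (simp add: \<beta>_def Bsym)
    also have "\<dots> = c * B x (g z)" using h by (simp add: BscL gH)
    finally show "\<beta> z (fscale c x) = c * \<beta> z x" by (simp add: \<beta>_def Bsym)
  next
    fix x assume "x \<in> U"
    then have h: "x \<in> H" using UH by auto
    have "\<beta> x x = Q (x + g x) - Q (g x) - Q x"
      by (simp add: \<beta>_def B_def polar_def add.commute)
    then show "\<beta> x x = 0" using g_prop[OF h] QW QV \<open>x \<in> U\<close> QU by simp
  qed
  have rr: "rad U \<beta> = U \<inter> W"
  proof
    show "U \<inter> W \<subseteq> rad U \<beta>"
    proof
      fix x assume x: "x \<in> U \<inter> W"
      then have "g x = 0" using UH sV by (intro g_eq) (auto simp: fs.subspace_0)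
      then show "x \<in> rad U \<beta>" using x by (simp add: rad_def \<beta>_def Bsym B0)
    qed
  next
    show "rad U \<beta> \<subseteq> U \<inter> W"
    proof
      fix x assume x: "x \<in> rad U \<beta>"
      then have xU: "x \<in> U" and z: "\<forall>y\<in>U. B (g x) y = 0" by (auto simp: rad_def \<beta>_def)
      have xH: "x \<in> H" using xU UH by auto
      have gV: "g x \<in> V" using g_prop[OF xH] by simp
      have "\<forall>h\<in>H. B (g x) h = 0"
      proof
        fix h assume "h \<in> H"
        then have "h \<in> ssum U V" using HUV by simp
        then obtain u v where uv: "h = u + v" "u \<in> U" "v \<in> V" by (auto simp: ssum_def)
        have "B (g x) h = B h (g x)" by (simp add: Bsym)
        also have "\<dots> = B u (g x) + B v (g x)" unfolding uv(1) using uv UH VH gH[OF xH] by (intro BaddL) auto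
        also have "\<dots> = 0" using z uv Bts[OF sV QV uv(3) gV] by (simp add: Bsym)
        finally show "B (g x) h = 0" .
      qed
      then have "g x = 0" using nd gV VH QV by (auto simp: nondegenerate_on_def B_def)
      then show "x \<in> U \<inter> W" using g_prop[OF xH] xU by simp
    qed
  qed
  obtain k where "card U = card (rad U \<beta>) * q ^ (2 * k)"
    using alt_even[OF fU sU bl] unfolding q_def by blast
  then have "q ^ m = q ^ (Suc (2 * k))" using cU cUW rr by simp
  then have "m = Suc (2 * k)" using q2 power_inject_exp[of q m "Suc (2*k)"] by simp
  then show ?thesis by simp
qed


lemma lsub_facts:
  assumes "lsubspace n (U :: (nat \<Rightarrow> 'a::{field,finite}) set)"
  shows "finite U" "fs.subspace U" "U \<subseteq> ambient n" "card U = card (UNIV :: 'a set) ^ vdim U"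
proof -
  show U: "U \<subseteq> ambient n" "fs.subspace U" using assms by (auto simp: lsubspace_def)
  show f: "finite U" using U finite_ambient finite_subset by blast
  show "card U = card (UNIV :: 'a set) ^ vdim U" by (rule card_subspace[OF f U(2)])
qed

lemma point_unique:
  fixes S :: "nat \<Rightarrow> (nat \<Rightarrow> 'a::{field,finite}) set"
  assumes av: "avsp n H N S" and i: "i < N" and j: "j < N"
    and vi: "v \<in> S i" and vj: "v \<in> S j" and vH: "v \<notin> H"
  shows "i = j"
proof -
  have lH: "lsubspace n H" and lS: "\<And>i. i < N \<Longrightarrow> lsubspace n (S i)"
    and uq: "\<And>p. lsubspace n p \<and> vdim p = 1 \<and> \<not> p \<subseteq> H \<Longrightarrow> \<exists>!i. i < N \<and> p \<subseteq> S i"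
    using av by (auto simp: avsp_def)
  have sH: "fs.subspace H" using lsub_facts[OF lH] by simp
  have v0: "v \<noteq> 0" using vH fs.subspace_0[OF sH] by auto
  have va: "v \<in> ambient n" using lsub_facts(3)[OF lS[OF i]] vi by auto
  define p where "p = range (\<lambda>c. fscale c v)"
  have pa: "p \<subseteq> ambient n" using va by (auto simp: p_def ambient_def fscale_def)
  have ps: "fs.subspace p"
    unfolding fs.subspace_def p_def
  proof (intro conjI ballI allI)
    show "0 \<in> range (\<lambda>c. fscale c v)" by (intro range_eqI[of _ _ 0]) (simp add: fscale_def zero_fun_def)
  next
    fix x y assume "x \<in> range (\<lambda>c. fscale c v)" "y \<in> range (\<lambda>c. fscale c v)"
    then obtain a b where "x = fscale a v" "y = fscale b v" by auto
    then show "x + y \<in> range (\<lambda>c. fscale c v)"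
      by (intro range_eqI[of _ _ "a + b"]) (simp add: fscale_def fun_eq_iff algebra_simps)
  next
    fix c x assume "x \<in> range (\<lambda>c. fscale c v)"
    then obtain a where "x = fscale a v" by auto
    then show "fscale c x \<in> range (\<lambda>c. fscale c v)"
      by (intro range_eqI[of _ _ "c * a"]) (simp add: fscale_def fun_eq_iff algebra_simps)
  qed
  have lp: "lsubspace n p" using pa ps by (simp add: lsubspace_def)
  have inj: "inj (\<lambda>c. fscale c v)"
  proof (rule injI)
    fix a b assume "fscale a v = fscale b v"
    moreover obtain k where "v k \<noteq> 0" using v0 by (auto simp: fun_eq_iff)
    ultimately show "a = b" by (auto simp: fscale_def fun_eq_iff)
  qed
  have "card p = card (UNIV :: 'a set)" unfolding p_def using inj by (simp add: card_image)
  then have "card (UNIV :: 'a set) ^ vdim p = card (UNIV :: 'a set)" using lsub_facts(4)[OF lp] by simp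
  then have dp: "vdim p = 1" using power_eq_q[OF card_ge2] by blast
  have "v \<in> p" unfolding p_def by (intro range_eqI[of _ _ 1]) (simp add: fscale_def)
  then have npH: "\<not> p \<subseteq> H" using vH by auto
  have "p \<subseteq> S i" "p \<subseteq> S j"
    using vi vj lsub_facts(2)[OF lS[OF i]] lsub_facts(2)[OF lS[OF j]]
    by (auto simp: p_def fs.subspace_scale)
  then show ?thesis using uq[of p] lp dp npH i j by blast
qed

theorem mainTheorem6:
  fixes H P0 :: "(nat \<Rightarrow> 'a::{field,finite}) set"
    and Q :: "(nat \<Rightarrow> 'a) \<Rightarrow> 'a"
    and S :: "nat \<Rightarrow> (nat \<Rightarrow> 'a) set"
    and r :: nat
  assumes "odd r"
    and "hyperbolic_avsp r H Q P0 S"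
  shows "(\<forall>i < card (UNIV :: 'a set) ^ ((r + 1) div 2). \<forall>j < card (UNIV :: 'a set) ^ ((r + 1) div 2). i \<noteq> j \<longrightarrow>
            vdim (S i \<inter> S j) = 1 \<and> vdim (S i \<inter> S j \<inter> H) = 1)
         \<and> r mod 4 \<noteq> 3"
proof -
  define q where "q = card (UNIV :: 'a set)"
  define m where "m = (r + 1) div 2"
  define N where "N = q ^ m"
  have q2: "2 \<le> q" unfolding q_def by (rule card_ge2)
  have rm: "r + 1 = 2 * m" using assms(1) by (simp add: m_def)
  have hyp: "avsp (r + 2) H N S" "\<forall>i<N. vdim (S i) = m + 1" "hyperbolic_quadric (r + 2) H Q"
    "generator (r + 2) H Q P0"
    "\<forall>i<N. generator (r + 2) H Q (S i \<inter> H) \<and> S i \<inter> H \<inter> P0 = {0}"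
    "\<forall>i<N. \<forall>j<N. i \<noteq> j \<longrightarrow> vdim (S i \<inter> S j) \<le> 1 \<and> vdim (S i \<inter> S j \<inter> H) \<le> 1"
    using assms(2) unfolding hyperbolic_avsp_def Let_def N_def m_def q_def by auto
  have lH: "lsubspace (r + 2) H" and dH: "vdim H + 1 = r + 2"
    and lS: "\<And>i. i < N \<Longrightarrow> lsubspace (r + 2) (S i)"
    using hyp(1) by (auto simp: avsp_def)
  have cS: "card (S i) = q ^ (m + 1)" if "i < N" for i
    using lsub_facts(4)[OF lS[OF that]] hyp(2) that by (simp add: q_def)
  have part1: "vdim (S i \<inter> S j) = 1 \<and> vdim (S i \<inter> S j \<inter> H) = 1"
    if ij: "i < N" "j < N" "i \<noteq> j" for i j
  proof -
    have fi: "finite (S i)" "fs.subspace (S i)" "S i \<subseteq> ambient (r + 2)" using lsub_facts[OF lS[OF ij(1)]] by auto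
    have fj: "finite (S j)" "fs.subspace (S j)" "S j \<subseteq> ambient (r + 2)" using lsub_facts[OF lS[OF ij(2)]] by auto
    have sI: "fs.subspace (S i \<inter> S j)" using fi fj by (simp add: fs.subspace_inter)
    have fI: "finite (S i \<inter> S j)" using fi by simp
    have cI: "card (S i \<inter> S j) = q ^ vdim (S i \<inter> S j)" using card_subspace[OF fI sI] by (simp add: q_def)
    have "ssum (S i) (S j) \<subseteq> ambient (r + 2)" using fi(3) fj(3) unfolding ssum_def ambient_def by fastforce
    then have "card (ssum (S i) (S j)) \<le> q ^ (r + 2)"
      using card_mono[OF finite_ambient] card_ambient unfolding q_def by metis
    moreover have "card (ssum (S i) (S j)) * card (S i \<inter> S j) = q ^ (m + 1) * q ^ (m + 1)"
      using card_ssum[OF fi(1) fj(1) fi(2) fj(2)] cS ij by simp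
    ultimately have "q ^ (m + 1) * q ^ (m + 1) \<le> q ^ (r + 2) * card (S i \<inter> S j)"
      by (metis mult_le_mono1)
    then have le: "q * q ^ (r + 2) \<le> q ^ (r + 2) * card (S i \<inter> S j)"
    proof -
      have ex: "(m + 1) + (m + 1) = Suc (r + 2)" using rm by simp
      have "q ^ (m + 1) * q ^ (m + 1) = q ^ Suc (r + 2)" by (metis ex power_add)
      then show ?thesis using \<open>q ^ (m + 1) * q ^ (m + 1) \<le> q ^ (r + 2) * card (S i \<inter> S j)\<close> by (metis power_Suc)
    qed
    have "vdim (S i \<inter> S j) \<noteq> 0"
    proof
      assume "vdim (S i \<inter> S j) = 0"
      then have "card (S i \<inter> S j) = 1" using cI by simp
      then show False using le q2 by simp
    qed
    then have d1: "vdim (S i \<inter> S j) = 1" using hyp(6) ij by force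
    have "S i \<inter> S j \<subseteq> H"
      using point_unique[OF hyp(1) ij(1) ij(2)] ij(3) by blast
    then have "S i \<inter> S j \<inter> H = S i \<inter> S j" by blast
    then show ?thesis using d1 by simp
  qed
  have part2: "r mod 4 \<noteq> 3"
  proof
    assume r3: "r mod 4 = 3"
    then have em: "even m" using rm by presburger
    have "m \<noteq> 0" using rm by simp
    then have "q \<le> N" unfolding N_def using q2 by (simp add: self_le_power)
    then have N1: "1 < N" using q2 by simp
    define U where "U = S 0 \<inter> H"
    define W where "W = S 1 \<inter> H"
    have gU: "generator (r + 2) H Q U" and UV: "U \<inter> P0 = {0}" using hyp(5) N1 by (auto simp: U_def)
    have gW: "generator (r + 2) H Q W" and WV: "W \<inter> P0 = {0}" using hyp(5) N1 by (auto simp: W_def)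
    have hq: "quadratic_form_on H Q" "nondegenerate_on H Q" using hyp(3) by (auto simp: hyperbolic_quadric_def)
    have vH: "vdim H = 2 * m" using dH rm by simp
    have gfacts: "finite X \<and> fs.subspace X \<and> X \<subseteq> H \<and> card X = q ^ m \<and> (\<forall>x\<in>X. Q x = 0)"
      if "generator (r + 2) H Q X" for X
      using that lsub_facts[of "r + 2" X] vH unfolding generator_def q_def by auto
    have UW: "U \<inter> W = S 0 \<inter> S 1 \<inter> H" by (auto simp: U_def W_def)
    have lUW: "lsubspace (r + 2) (U \<inter> W)"
      using gU gW by (auto simp: generator_def lsubspace_def fs.subspace_inter)
    have "vdim (U \<inter> W) = 1" using part1[of 0 1] N1 UW by simp
    then have cUW: "card (U \<inter> W) = q" using lsub_facts(4)[OF lUW] by (simp add: q_def)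
    have "odd m"
      using parity[of H m Q U P0 W] gfacts[OF gU] gfacts[OF gW] gfacts[OF hyp(4)] hq UV WV cUW
        lsub_facts[OF lH] vH unfolding q_def by auto
    then show False using em by simp
  qed
  show ?thesis using part1 part2 unfolding N_def q_def m_def by blast
qed

end
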